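(* Let $D$ be a planar distributive lattice with a fixed planar diagram, and assume $D$ has two distinct join-reducible coatoms $c_\ell$ and $c_r$, with $c_\ell$ to the left of $c_r$. Let $d_\ell$ be the unique element of the left boundary chain $\mathrm{LBound}(D)$ with $d_\ell\prec c_\ell$, and $d_r$ the unique element of the right boundary chain $\mathrm{RBound}(D)$ with $d_r\prec c_r$. Then $1_D=\mathrm{ljsp}(d_\ell)\vee\mathrm{rjsp}(d_r)$.
   Context: A planar lattice is a finite lattice with a fixed Hasse diagram drawn in the plane without crossing edges; its left boundary chain $\mathrm{LBound}(D)$ and right boundary chain $\mathrm{RBound}(D)$ are the maximal chains forming the left and right boundary of the diagram. (In this situation $c_\ell\in\mathrm{LBound}(D)$, $c_r\in\mathrm{RBound}(D)$.) $J_0(D)$ is the set of join-irreducible elements together with $0$. For $x\in D$, the left join support $\mathrm{ljsp}(x)$ is the largest element of $\mathrm{LBound}(D)\cap J_0(D)\cap{\downarrow}x$, and the right join support $\mathrm{rjsp}(x)$ is the largest element of $\mathrm{RBound}(D)\cap J_0(D)\cap{\downarrow}x$, where ${\downarrow}x=\{y: y\le x\}$. *)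

theory Defs
  imports "HOL-Analysis.Analysis"
begin

text \<open>Finite lattices are modelled by a type of class finite, bounded lattice
  (0 = bot, 1 = top). A diagram is a placement of the elements in the plane
  (first coordinate = x, second = height y); the edges are straight segments
  between covering pairs.\<close>

definition covers :: "'a::order \<Rightarrow> 'a \<Rightarrow> bool" (infix "\<lessdot>" 50) where
  "x \<lessdot> y \<longleftrightarrow> x < y \<and> \<not> (\<exists>z. x < z \<and> z < y)"

definition planar_diagram :: "('a::order \<Rightarrow> real \<times> real) \<Rightarrow> bool" where
  "planar_diagram pos \<longleftrightarrow>
     inj pos
   \<and> (\<forall>x y. x \<lessdot> y \<longrightarrow> snd (pos x) < snd (pos y))
   \<and> (\<forall>x y z. x \<lessdot> y \<longrightarrow> pos z \<in> closed_segment (pos x) (pos y) \<longrightarrow> z = x \<or> z = y)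
   \<and> (\<forall>a b c d. a \<lessdot> b \<longrightarrow> c \<lessdot> d \<longrightarrow> (a, b) \<noteq> (c, d) \<longrightarrow>
        closed_segment (pos a) (pos b) \<inter> closed_segment (pos c) (pos d)
          \<subseteq> pos ` ({a, b} \<inter> {c, d}))"

definition is_chain :: "'a::order set \<Rightarrow> bool" where
  "is_chain C \<longleftrightarrow> (\<forall>x\<in>C. \<forall>y\<in>C. x \<le> y \<or> y \<le> x)"

definition maximal_chain :: "'a::order set \<Rightarrow> bool" where
  "maximal_chain C \<longleftrightarrow> is_chain C \<and> (\<forall>D. is_chain D \<longrightarrow> C \<subseteq> D \<longrightarrow> D = C)"

text \<open>cross product of the vectors (b - a) and (p - a): positive iff p lies strictly
  to the left of the line through a and b, directed from a to b.\<close>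
definition cross :: "real \<times> real \<Rightarrow> real \<times> real \<Rightarrow> real \<times> real \<Rightarrow> real" where
  "cross a b p = (fst b - fst a) * (snd p - snd a) - (snd b - snd a) * (fst p - fst a)"

definition strictly_left_of_chain :: "('a::order \<Rightarrow> real \<times> real) \<Rightarrow> 'a set \<Rightarrow> real \<times> real \<Rightarrow> bool" where
  "strictly_left_of_chain pos C p \<longleftrightarrow>
     (\<exists>a\<in>C. \<exists>b\<in>C. a \<lessdot> b \<and> snd (pos a) \<le> snd p \<and> snd p \<le> snd (pos b)
        \<and> cross (pos a) (pos b) p > 0)"

definition strictly_right_of_chain :: "('a::order \<Rightarrow> real \<times> real) \<Rightarrow> 'a set \<Rightarrow> real \<times> real \<Rightarrow> bool" where
  "strictly_right_of_chain pos C p \<longleftrightarrow>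
     (\<exists>a\<in>C. \<exists>b\<in>C. a \<lessdot> b \<and> snd (pos a) \<le> snd p \<and> snd p \<le> snd (pos b)
        \<and> cross (pos a) (pos b) p < 0)"

definition left_boundary :: "('a::order \<Rightarrow> real \<times> real) \<Rightarrow> 'a set \<Rightarrow> bool" where
  "left_boundary pos L \<longleftrightarrow> maximal_chain L \<and> (\<forall>z. \<not> strictly_left_of_chain pos L (pos z))"

definition right_boundary :: "('a::order \<Rightarrow> real \<times> real) \<Rightarrow> 'a set \<Rightarrow> bool" where
  "right_boundary pos R \<longleftrightarrow> maximal_chain R \<and> (\<forall>z. \<not> strictly_right_of_chain pos R (pos z))"

text \<open>Kelly--Rival: x is to the left of y if they are incomparable and x lies
  strictly left of some maximal chain through y.\<close>
definition left_of :: "('a::order \<Rightarrow> real \<times> real) \<Rightarrow> 'a \<Rightarrow> 'a \<Rightarrow> bool" where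
  "left_of pos x y \<longleftrightarrow> \<not> x \<le> y \<and> \<not> y \<le> x \<and>
     (\<exists>C. maximal_chain C \<and> y \<in> C \<and> strictly_left_of_chain pos C (pos x))"

definition join_irreducible :: "'a::bounded_lattice \<Rightarrow> bool" where
  "join_irreducible x \<longleftrightarrow> x \<noteq> bot \<and> (\<forall>a b. x = sup a b \<longrightarrow> x = a \<or> x = b)"

definition join_reducible :: "'a::lattice \<Rightarrow> bool" where
  "join_reducible x \<longleftrightarrow> (\<exists>a b. a < x \<and> b < x \<and> x = sup a b)"

definition J0 :: "'a::bounded_lattice set" where
  "J0 = {x. join_irreducible x} \<union> {bot}"

definition jsp :: "'a::bounded_lattice set \<Rightarrow> 'a \<Rightarrow> 'a" where
  "jsp B x = (GREATEST y. y \<in> B \<and> y \<in> J0 \<and> y \<le> x)"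

definition ljsp :: "'a::bounded_lattice set \<Rightarrow> 'a \<Rightarrow> 'a" where
  "ljsp L x = jsp L x"  \<comment> \<open>L is the left boundary chain\<close>

definition rjsp :: "'a::bounded_lattice set \<Rightarrow> 'a \<Rightarrow> 'a" where
  "rjsp R x = jsp R x"  \<comment> \<open>R is the right boundary chain\<close>

end

theory Submission
  imports Defs
begin


lemma cover_above:
  fixes x y :: "'a::{finite,order}"
  assumes "x < y" shows "\<exists>z. x \<lessdot> z \<and> z \<le> y"
proof -
  obtain m where m: "m \<in> {z. x < z \<and> z \<le> y}" "\<forall>b\<in>{z. x < z \<and> z \<le> y}. b \<le> m \<longrightarrow> m = b"
    using finite_has_minimal[of "{z. x < z \<and> z \<le> y}"] assms by auto
  have "x \<lessdot> m" unfolding covers_def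
  proof (intro conjI notI)
    show "x < m" using m by auto
    assume "\<exists>z. x < z \<and> z < m"
    then obtain z where "x < z" "z < m" by auto
    thus False using m by (metis (mono_tags, lifting) mem_Collect_eq order.strict_iff_not order.trans)
  qed
  thus ?thesis using m by auto
qed

lemma cover_below:
  fixes x y :: "'a::{finite,order}"
  assumes "x < y" shows "\<exists>z. x \<le> z \<and> z \<lessdot> y"
proof -
  obtain m where m: "m \<in> {z. x \<le> z \<and> z < y}" "\<forall>b\<in>{z. x \<le> z \<and> z < y}. m \<le> b \<longrightarrow> m = b"
    using finite_has_maximal[of "{z. x \<le> z \<and> z < y}"] assms by auto
  have "m \<lessdot> y" unfolding covers_def
  proof (intro conjI notI)
    show "m < y" using m by auto
    assume "\<exists>z. m < z \<and> z < y"
    then obtain z where "m < z" "z < y" by auto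
    thus False using m by (metis (mono_tags, lifting) mem_Collect_eq order.strict_iff_not order.trans)
  qed
  thus ?thesis using m by auto
qed

lemma height_mono:
  fixes pos :: "'a::{finite,order} \<Rightarrow> real \<times> real"
  assumes P: "planar_diagram pos"
  shows "x < y \<Longrightarrow> snd (pos x) < snd (pos y)"
proof (induction "card {z. x < z \<and> z < y}" arbitrary: x rule: less_induct)
  case less
  obtain z where z: "x \<lessdot> z" "z \<le> y" using cover_above[OF less.prems] by blast
  have hz: "snd (pos x) < snd (pos z)" using P z(1) unfolding planar_diagram_def by blast
  show ?case
  proof (cases "z = y")
    case True then show ?thesis using hz by simp
  next
    case False
    hence zy: "z < y" using z by simp
    have "{w. z < w \<and> w < y} \<subset> {w. x < w \<and> w < y}"
      using z zy unfolding covers_def by (auto intro: less_trans)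
    hence "card {w. z < w \<and> w < y} < card {w. x < w \<and> w < y}"
      by (simp add: psubset_card_mono)
    from less.hyps[OF this zy] hz show ?thesis by simp
  qed
qed



context
  fixes C :: "'a::{finite,bounded_lattice} set"
  assumes MC: "maximal_chain C"
begin

lemma mc_chain: "x \<in> C \<Longrightarrow> y \<in> C \<Longrightarrow> x \<le> y \<or> y \<le> x"
  using MC unfolding maximal_chain_def is_chain_def by blast

lemma mc_ext: "(\<And>c. c \<in> C \<Longrightarrow> z \<le> c \<or> c \<le> z) \<Longrightarrow> z \<in> C"
proof -
  assume H: "\<And>c. c \<in> C \<Longrightarrow> z \<le> c \<or> c \<le> z"
  have "is_chain (insert z C)" using H mc_chain unfolding is_chain_def by blast
  hence "insert z C = C" using MC unfolding maximal_chain_def by blast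
  thus ?thesis by blast
qed

lemma mc_bot: "bot \<in> C" by (rule mc_ext) simp
lemma mc_top: "top \<in> C" by (rule mc_ext) simp

lemma mc_succ:
  assumes "a \<in> C" "a \<noteq> top" shows "\<exists>b\<in>C. a \<lessdot> b"
proof -
  have "top \<in> {c\<in>C. a < c}" using mc_top assms by (simp add: top.not_eq_extremum)
  then obtain b where b: "b \<in> {c\<in>C. a < c}" "\<forall>x\<in>{c\<in>C. a < c}. x \<le> b \<longrightarrow> b = x"
    using finite_has_minimal[of "{c\<in>C. a < c}"] by auto
  have "a \<lessdot> b" unfolding covers_def
  proof (intro conjI notI)
    show "a < b" using b by auto
    assume "\<exists>z. a < z \<and> z < b"
    then obtain z where z: "a < z" "z < b" by auto
    have "z \<in> C"
    proof (rule mc_ext)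
      fix c assume c: "c \<in> C"
      show "z \<le> c \<or> c \<le> z"
      proof (cases "c \<le> a")
        case True thus ?thesis using z by auto
      next
        case False
        hence "a < c" using mc_chain[OF c \<open>a \<in> C\<close>] by auto
        hence "c \<le> b \<longrightarrow> b = c" using b c by auto
        moreover have "c \<le> b \<or> b \<le> c" using mc_chain c b by auto
        ultimately have "b \<le> c" by auto
        thus ?thesis using z by auto
      qed
    qed
    thus False using b z by auto
  qed
  thus ?thesis using b by auto
qed

lemma mc_pred:
  assumes "a \<in> C" "a \<noteq> bot" shows "\<exists>b\<in>C. b \<lessdot> a"
proof -
  have "bot \<in> {c\<in>C. c < a}" using mc_bot assms by (simp add: bot.not_eq_extremum)
  then obtain b where b: "b \<in> {c\<in>C. c < a}" "\<forall>x\<in>{c\<in>C. c < a}. b \<le> x \<longrightarrow> b = x"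
    using finite_has_maximal[of "{c\<in>C. c < a}"] by auto
  have "b \<lessdot> a" unfolding covers_def
  proof (intro conjI notI)
    show "b < a" using b by auto
    assume "\<exists>z. b < z \<and> z < a"
    then obtain z where z: "b < z" "z < a" by auto
    have "z \<in> C"
    proof (rule mc_ext)
      fix c assume c: "c \<in> C"
      show "z \<le> c \<or> c \<le> z"
      proof (cases "a \<le> c")
        case True thus ?thesis using z by auto
      next
        case False
        hence "c < a" using mc_chain[OF c \<open>a \<in> C\<close>] by auto
        hence "b \<le> c \<longrightarrow> b = c" using b c by auto
        moreover have "c \<le> b \<or> b \<le> c" using mc_chain c b by auto
        ultimately have "c \<le> b" by auto
        thus ?thesis using z by auto
      qed
    qed
    thus False using b z by auto
  qed
  thus ?thesis using b by auto
qed

end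



definition Xf :: "real \<times> real \<Rightarrow> real \<times> real \<Rightarrow> real \<Rightarrow> real" where
  "Xf A B t = fst A + (t - snd A) / (snd B - snd A) * (fst B - fst A)"

lemma Xf_bot: "Xf A B (snd A) = fst A" by (simp add: Xf_def)
lemma Xf_top: "snd A \<noteq> snd B \<Longrightarrow> Xf A B (snd B) = fst B" by (simp add: Xf_def)

lemma cross_X: "snd A \<noteq> snd B \<Longrightarrow> cross A B p = (snd B - snd A) * (Xf A B (snd p) - fst p)"
  unfolding cross_def Xf_def by (simp add: field_simps)

lemma seg_iff:
  assumes "snd A < snd B"
  shows "p \<in> closed_segment A B \<longleftrightarrow> snd A \<le> snd p \<and> snd p \<le> snd B \<and> fst p = Xf A B (snd p)"
proof
  assume "p \<in> closed_segment A B"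
  then obtain u where u: "0 \<le> u" "u \<le> 1" "p = (1 - u) *\<^sub>R A + u *\<^sub>R B"
    unfolding closed_segment_def by auto
  have s: "snd p = snd A + u * (snd B - snd A)" "fst p = fst A + u * (fst B - fst A)"
    by (simp_all add: u(3) algebra_simps)
  have "(snd p - snd A) / (snd B - snd A) = u" using assms s(1) by simp
  hence "Xf A B (snd p) = fst p" unfolding Xf_def using s(2) by simp
  moreover have "snd A \<le> snd p" "snd p \<le> snd B" using s(1) u(1,2) assms
    by (auto intro!: mult_nonneg_nonneg) (smt (verit) mult_left_le_one_le)
  ultimately show "snd A \<le> snd p \<and> snd p \<le> snd B \<and> fst p = Xf A B (snd p)" by simp
next
  assume H: "snd A \<le> snd p \<and> snd p \<le> snd B \<and> fst p = Xf A B (snd p)"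
  define u where "u = (snd p - snd A) / (snd B - snd A)"
  have u: "0 \<le> u" "u \<le> 1" using H assms unfolding u_def by (auto simp: divide_simps)
  have "snd p = snd A + u * (snd B - snd A)" using assms unfolding u_def by simp
  moreover have "fst p = fst A + u * (fst B - fst A)" using H unfolding u_def Xf_def by simp
  ultimately have "p = (1 - u) *\<^sub>R A + u *\<^sub>R B" by (simp add: prod_eq_iff algebra_simps)
  thus "p \<in> closed_segment A B" unfolding closed_segment_def using u by auto
qed

definition onpath :: "('a::order \<Rightarrow> real \<times> real) \<Rightarrow> 'a set \<Rightarrow> real \<times> real \<Rightarrow> bool" where
  "onpath pos C p \<longleftrightarrow> (\<exists>a\<in>C. \<exists>b\<in>C. a \<lessdot> b \<and> p \<in> closed_segment (pos a) (pos b))"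

context
  fixes pos :: "'a::{finite,bounded_lattice} \<Rightarrow> real \<times> real" and C :: "'a set"
  assumes P: "planar_diagram pos" and MC: "maximal_chain C"
begin

lemma hcov: "x \<lessdot> y \<Longrightarrow> snd (pos x) < snd (pos y)"
  using P unfolding planar_diagram_def by blast

lemma hlt: "x < y \<Longrightarrow> snd (pos x) < snd (pos y)"
  using height_mono[OF P] by blast

lemma ch_le: "a \<in> C \<Longrightarrow> b \<in> C \<Longrightarrow> snd (pos a) \<le> snd (pos b) \<Longrightarrow> a \<le> b"
  using mc_chain[OF MC, of a b] hlt[of b a] by (auto simp: less_le)

lemma ch_eq: "a \<in> C \<Longrightarrow> b \<in> C \<Longrightarrow> snd (pos a) = snd (pos b) \<Longrightarrow> a = b"
  using ch_le[of a b] ch_le[of b a] by auto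

lemma bracket_exists:
  assumes "bot \<noteq> (top::'a)" "snd (pos bot) \<le> t" "t \<le> snd (pos top)"
  shows "\<exists>a\<in>C. \<exists>b\<in>C. a \<lessdot> b \<and> snd (pos a) \<le> t \<and> t \<le> snd (pos b)"
proof -
  let ?S = "{c\<in>C. snd (pos c) \<le> t \<and> c \<noteq> top}"
  have "bot \<in> ?S" using assms mc_bot[OF MC] by auto
  then obtain a where a: "a \<in> ?S" "\<forall>x\<in>?S. a \<le> x \<longrightarrow> a = x"
    using finite_has_maximal[of ?S] by auto
  obtain b where b: "b \<in> C" "a \<lessdot> b" using mc_succ[OF MC, of a] a by auto
  have "t \<le> snd (pos b)"
  proof (cases "b = top")
    case True thus ?thesis using assms by simp
  next
    case False
    show ?thesis
    proof (rule ccontr)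
      assume "\<not> t \<le> snd (pos b)"
      hence "b \<in> ?S" using b False by auto
      thus False using a b unfolding covers_def by auto
    qed
  qed
  thus ?thesis using a b by auto
qed

lemma bracket_vertex:
  assumes "v \<in> C" "a \<in> C" "b \<in> C" "a \<lessdot> b" "snd (pos a) \<le> snd (pos v)" "snd (pos v) \<le> snd (pos b)"
  shows "v = a \<or> v = b"
proof -
  have "a \<le> v" "v \<le> b" using ch_le assms by auto
  thus ?thesis using assms(4) unfolding covers_def by (auto simp: less_le)
qed

lemma bracket_two:
  assumes "a \<in> C" "b \<in> C" "a \<lessdot> b" "a' \<in> C" "b' \<in> C" "a' \<lessdot> b'"
    "snd (pos a) \<le> t" "t \<le> snd (pos b)" "snd (pos a') \<le> t" "t \<le> snd (pos b')"
  shows "(a = a' \<and> b = b') \<or> (b = a' \<and> t = snd (pos b)) \<or> (b' = a \<and> t = snd (pos a))"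
proof (cases "b \<le> a'")
  case True
  have "snd (pos b) \<le> snd (pos a')" using True hlt[of b a'] by (auto simp: less_le)
  hence "t = snd (pos b)" "snd (pos b) = snd (pos a')" using assms by auto
  thus ?thesis using ch_eq assms by auto
next
  case F1: False
  show ?thesis
  proof (cases "b' \<le> a")
    case True
    have "snd (pos b') \<le> snd (pos a)" using True hlt[of b' a] by (auto simp: less_le)
    hence "t = snd (pos a)" "snd (pos b') = snd (pos a)" using assms by auto
    thus ?thesis using ch_eq assms by auto
  next
    case F2: False
    have "a' < b" using F1 mc_chain[OF MC, of a' b] assms by (auto simp: less_le)
    have "a < b'" using F2 mc_chain[OF MC, of a b'] assms by (auto simp: less_le)
    have "a' \<le> a"
    proof (rule ccontr)
      assume "\<not> a' \<le> a" hence "a < a'" using mc_chain[OF MC, of a a'] assms by (auto simp: less_le)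
      thus False using \<open>a' < b\<close> assms(3) unfolding covers_def by auto
    qed
    moreover have "a \<le> a'"
    proof (rule ccontr)
      assume "\<not> a \<le> a'" hence "a' < a" using mc_chain[OF MC, of a a'] assms by (auto simp: less_le)
      thus False using \<open>a < b'\<close> assms(6) unfolding covers_def by auto
    qed
    ultimately have "a = a'" by simp
    moreover have "b = b'"
    proof -
      have "b \<le> b' \<or> b' \<le> b" using mc_chain[OF MC] assms by auto
      thus ?thesis using assms(3,6) \<open>a = a'\<close> unfolding covers_def by (auto simp: less_le)
    qed
    ultimately show ?thesis by simp
  qed
qed

lemma XU:
  assumes "a \<in> C" "b \<in> C" "a \<lessdot> b" "a' \<in> C" "b' \<in> C" "a' \<lessdot> b'"
    "snd (pos a) \<le> t" "t \<le> snd (pos b)" "snd (pos a') \<le> t" "t \<le> snd (pos b')"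
  shows "Xf (pos a) (pos b) t = Xf (pos a') (pos b') t"
  using bracket_two[OF assms] hcov[OF assms(3)] hcov[OF assms(6)]
  by (auto simp: Xf_bot Xf_top)

lemma side_char:
  assumes "a \<in> C" "b \<in> C" "a \<lessdot> b" "snd (pos a) \<le> snd p" "snd p \<le> snd (pos b)"
  shows "strictly_left_of_chain pos C p \<longleftrightarrow> fst p < Xf (pos a) (pos b) (snd p)"
    and "strictly_right_of_chain pos C p \<longleftrightarrow> fst p > Xf (pos a) (pos b) (snd p)"
    and "onpath pos C p \<longleftrightarrow> fst p = Xf (pos a) (pos b) (snd p)"
proof -
  have hab: "snd (pos a) < snd (pos b)" using hcov assms by auto
  show "strictly_left_of_chain pos C p \<longleftrightarrow> fst p < Xf (pos a) (pos b) (snd p)"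
  proof
    assume "strictly_left_of_chain pos C p"
    then obtain a' b' where ab': "a' \<in> C" "b' \<in> C" "a' \<lessdot> b'" "snd (pos a') \<le> snd p"
       "snd p \<le> snd (pos b')" "cross (pos a') (pos b') p > 0"
      unfolding strictly_left_of_chain_def by blast
    have "snd (pos a') < snd (pos b')" using hcov ab' by auto
    hence "fst p < Xf (pos a') (pos b') (snd p)" using ab'(6) cross_X[of "pos a'" "pos b'" p]
      by (simp add: zero_less_mult_iff)
    thus "fst p < Xf (pos a) (pos b) (snd p)" using XU[OF assms(1-3) ab'(1-3) assms(4,5) ab'(4,5)] by simp
  next
    assume "fst p < Xf (pos a) (pos b) (snd p)"
    hence "cross (pos a) (pos b) p > 0" using cross_X[of "pos a" "pos b" p] hab by simp
    thus "strictly_left_of_chain pos C p" unfolding strictly_left_of_chain_def using assms by blast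
  qed
  show "strictly_right_of_chain pos C p \<longleftrightarrow> fst p > Xf (pos a) (pos b) (snd p)"
  proof
    assume "strictly_right_of_chain pos C p"
    then obtain a' b' where ab': "a' \<in> C" "b' \<in> C" "a' \<lessdot> b'" "snd (pos a') \<le> snd p"
       "snd p \<le> snd (pos b')" "cross (pos a') (pos b') p < 0"
      unfolding strictly_right_of_chain_def by blast
    have "snd (pos a') < snd (pos b')" using hcov ab' by auto
    hence "fst p > Xf (pos a') (pos b') (snd p)" using ab'(6) cross_X[of "pos a'" "pos b'" p]
      by (simp add: mult_less_0_iff)
    thus "fst p > Xf (pos a) (pos b) (snd p)" using XU[OF assms(1-3) ab'(1-3) assms(4,5) ab'(4,5)] by simp
  next
    assume "fst p > Xf (pos a) (pos b) (snd p)"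
    hence "cross (pos a) (pos b) p < 0" using cross_X[of "pos a" "pos b" p] hab by (simp add: mult_pos_neg)
    thus "strictly_right_of_chain pos C p" unfolding strictly_right_of_chain_def using assms by blast
  qed
  show "onpath pos C p \<longleftrightarrow> fst p = Xf (pos a) (pos b) (snd p)"
  proof
    assume "onpath pos C p"
    then obtain a' b' where ab': "a' \<in> C" "b' \<in> C" "a' \<lessdot> b'" "p \<in> closed_segment (pos a') (pos b')"
      unfolding onpath_def by blast
    have "snd (pos a') < snd (pos b')" using hcov ab' by auto
    hence "snd (pos a') \<le> snd p" "snd p \<le> snd (pos b')" "fst p = Xf (pos a') (pos b') (snd p)"
      using seg_iff ab'(4) by blast+
    thus "fst p = Xf (pos a) (pos b) (snd p)" using XU[OF assms(1-3) ab'(1-3) assms(4,5)] by simp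
  next
    assume "fst p = Xf (pos a) (pos b) (snd p)"
    hence "p \<in> closed_segment (pos a) (pos b)" using seg_iff[OF hab] assms by blast
    thus "onpath pos C p" unfolding onpath_def using assms by blast
  qed
qed

end



lemma seg_snd:
  fixes p q z :: "real \<times> real"
  assumes "z \<in> closed_segment p q"
  shows "min (snd p) (snd q) \<le> snd z \<and> snd z \<le> max (snd p) (snd q)"
proof -
  obtain u where u: "0 \<le> u" "u \<le> 1" "z = (1 - u) *\<^sub>R p + u *\<^sub>R q"
    using assms unfolding closed_segment_def by auto
  have e: "snd z = (1 - u) * snd p + u * snd q" by (simp add: u(3))
  have a: "(1-u) * min (snd p) (snd q) \<le> (1-u) * snd p" using u by (intro mult_left_mono) auto
  have b: "u * min (snd p) (snd q) \<le> u * snd q" using u by (intro mult_left_mono) auto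
  have c: "(1-u) * snd p \<le> (1-u) * max (snd p) (snd q)" using u by (intro mult_left_mono) auto
  have d: "u * snd q \<le> u * max (snd p) (snd q)" using u by (intro mult_left_mono) auto
  show ?thesis using a b c d unfolding e by (simp add: algebra_simps)
qed

context
  fixes pos :: "'a::{finite,bounded_lattice} \<Rightarrow> real \<times> real" and C :: "'a set"
  assumes P: "planar_diagram pos" and MC: "maximal_chain C" and NT: "(bot::'a) \<noteq> top"
begin

lemma vrange: "snd (pos bot) \<le> snd (pos z)" "snd (pos z) \<le> snd (pos top)"
  using hlt[OF P MC, of bot z] hlt[OF P MC, of z top]
  by (auto simp: bot.not_eq_extremum top.not_eq_extremum le_less)
     (metis bot.not_eq_extremum less_eq_real_def, metis less_eq_real_def top.not_eq_extremum)

lemma trich: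
  assumes "snd (pos bot) \<le> snd p" "snd p \<le> snd (pos top)"
  shows "strictly_left_of_chain pos C p \<or> strictly_right_of_chain pos C p \<or> onpath pos C p"
proof -
  obtain a b where ab: "a \<in> C" "b \<in> C" "a \<lessdot> b" "snd (pos a) \<le> snd p" "snd p \<le> snd (pos b)"
    using bracket_exists[OF P MC NT assms] by blast
  show ?thesis using side_char[OF P MC ab] by linarith
qed

lemma excl_lr: "\<not> (strictly_left_of_chain pos C p \<and> strictly_right_of_chain pos C p)"
proof
  assume H: "strictly_left_of_chain pos C p \<and> strictly_right_of_chain pos C p"
  then obtain a b where ab: "a \<in> C" "b \<in> C" "a \<lessdot> b" "snd (pos a) \<le> snd p" "snd p \<le> snd (pos b)"
    unfolding strictly_left_of_chain_def by blast
  show False using side_char[OF P MC ab] H by linarith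
qed

lemma excl_lo: "\<not> (strictly_left_of_chain pos C p \<and> onpath pos C p)"
proof
  assume H: "strictly_left_of_chain pos C p \<and> onpath pos C p"
  then obtain a b where ab: "a \<in> C" "b \<in> C" "a \<lessdot> b" "snd (pos a) \<le> snd p" "snd p \<le> snd (pos b)"
    unfolding strictly_left_of_chain_def by blast
  show False using side_char[OF P MC ab] H by linarith
qed

lemma excl_ro: "\<not> (strictly_right_of_chain pos C p \<and> onpath pos C p)"
proof
  assume H: "strictly_right_of_chain pos C p \<and> onpath pos C p"
  then obtain a b where ab: "a \<in> C" "b \<in> C" "a \<lessdot> b" "snd (pos a) \<le> snd p" "snd p \<le> snd (pos b)"
    unfolding strictly_right_of_chain_def by blast
  show False using side_char[OF P MC ab] H by linarith
qed

lemma vertex_in: "z \<in> C \<Longrightarrow> onpath pos C (pos z)"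
proof -
  assume z: "z \<in> C"
  show ?thesis
  proof (cases "z = top")
    case False
    then obtain b where "b \<in> C" "z \<lessdot> b" using mc_succ[OF MC z] by auto
    thus ?thesis unfolding onpath_def using z by blast
  next
    case True
    then obtain b where "b \<in> C" "b \<lessdot> z" using mc_pred[OF MC z] NT by auto
    thus ?thesis unfolding onpath_def using z by blast
  qed
qed

lemma vertex_notin: "z \<notin> C \<Longrightarrow> \<not> onpath pos C (pos z)"
  unfolding onpath_def using P unfolding planar_diagram_def by blast

lemma vertex_side: "z \<notin> C \<Longrightarrow> strictly_left_of_chain pos C (pos z) \<or> strictly_right_of_chain pos C (pos z)"
  using trich[OF vrange] vertex_notin by blast

lemma vertex_in_noside: "z \<in> C \<Longrightarrow> \<not> strictly_left_of_chain pos C (pos z) \<and> \<not> strictly_right_of_chain pos C (pos z)"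
  using vertex_in excl_lo excl_ro by blast

lemma edge_path:
  assumes "u \<lessdot> v" "\<not> (u \<in> C \<and> v \<in> C)" "p \<in> closed_segment (pos u) (pos v)" "onpath pos C p"
  shows "p \<in> pos ` ({u,v} \<inter> C)"
proof -
  obtain a b where ab: "a \<in> C" "b \<in> C" "a \<lessdot> b" "p \<in> closed_segment (pos a) (pos b)"
    using assms(4) unfolding onpath_def by blast
  have "(u,v) \<noteq> (a,b)" using assms(2) ab by auto
  hence "closed_segment (pos u) (pos v) \<inter> closed_segment (pos a) (pos b) \<subseteq> pos ` ({u,v} \<inter> {a,b})"
    using P assms(1) ab(3) unfolding planar_diagram_def by blast
  hence "p \<in> pos ` ({u,v} \<inter> {a,b})" using assms(3) ab(4) by blast
  thus ?thesis using ab by blast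
qed

definition "E1 = (\<Union>ab\<in>{(a,b). a \<in> C \<and> b \<in> C \<and> a \<lessdot> b}.
   {z. snd (pos (fst ab)) \<le> snd z \<and> snd z \<le> snd (pos (snd ab)) \<and> fst z \<le> Xf (pos (fst ab)) (pos (snd ab)) (snd z)})"
definition "E2 = (\<Union>ab\<in>{(a,b). a \<in> C \<and> b \<in> C \<and> a \<lessdot> b}.
   {z. snd (pos (fst ab)) \<le> snd z \<and> snd z \<le> snd (pos (snd ab)) \<and> Xf (pos (fst ab)) (pos (snd ab)) (snd z) \<le> fst z})"

lemma closed_E1: "closed E1"
  unfolding E1_def Xf_def
  by (intro closed_UN ballI closed_Collect_conj closed_Collect_le continuous_intros) (auto dest: hcov[OF P MC])

lemma closed_E2: "closed E2"
  unfolding E2_def Xf_def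
  by (intro closed_UN ballI closed_Collect_conj closed_Collect_le continuous_intros) (auto dest: hcov[OF P MC])

lemma E1_iff:
  assumes "snd (pos bot) \<le> snd z" "snd z \<le> snd (pos top)"
  shows "z \<in> E1 \<longleftrightarrow> strictly_left_of_chain pos C z \<or> onpath pos C z"
proof -
  obtain a b where ab: "a \<in> C" "b \<in> C" "a \<lessdot> b" "snd (pos a) \<le> snd z" "snd z \<le> snd (pos b)"
    using bracket_exists[OF P MC NT assms] by blast
  show ?thesis
  proof
    assume "z \<in> E1"
    then obtain a' b' where ab': "a' \<in> C" "b' \<in> C" "a' \<lessdot> b'" "snd (pos a') \<le> snd z" "snd z \<le> snd (pos b')"
      "fst z \<le> Xf (pos a') (pos b') (snd z)" unfolding E1_def by auto
    thus "strictly_left_of_chain pos C z \<or> onpath pos C z" using side_char[OF P MC ab'(1-5)] by linarith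
  next
    assume "strictly_left_of_chain pos C z \<or> onpath pos C z"
    hence "fst z \<le> Xf (pos a) (pos b) (snd z)" using side_char[OF P MC ab] by linarith
    thus "z \<in> E1" unfolding E1_def using ab by auto
  qed
qed

lemma E2_iff:
  assumes "snd (pos bot) \<le> snd z" "snd z \<le> snd (pos top)"
  shows "z \<in> E2 \<longleftrightarrow> strictly_right_of_chain pos C z \<or> onpath pos C z"
proof -
  obtain a b where ab: "a \<in> C" "b \<in> C" "a \<lessdot> b" "snd (pos a) \<le> snd z" "snd z \<le> snd (pos b)"
    using bracket_exists[OF P MC NT assms] by blast
  show ?thesis
  proof
    assume "z \<in> E2"
    then obtain a' b' where ab': "a' \<in> C" "b' \<in> C" "a' \<lessdot> b'" "snd (pos a') \<le> snd z" "snd z \<le> snd (pos b')"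
      "Xf (pos a') (pos b') (snd z) \<le> fst z" unfolding E2_def by auto
    thus "strictly_right_of_chain pos C z \<or> onpath pos C z" using side_char[OF P MC ab'(1-5)] by linarith
  next
    assume "strictly_right_of_chain pos C z \<or> onpath pos C z"
    hence "Xf (pos a) (pos b) (snd z) \<le> fst z" using side_char[OF P MC ab] by linarith
    thus "z \<in> E2" unfolding E2_def using ab by auto
  qed
qed

lemma SIDE:
  assumes rp: "snd (pos bot) \<le> snd p" "snd p \<le> snd (pos top)"
    and rq: "snd (pos bot) \<le> snd q" "snd q \<le> snd (pos top)"
    and av: "\<forall>z\<in>closed_segment p q. \<not> onpath pos C z"
  shows "(strictly_left_of_chain pos C p \<longleftrightarrow> strictly_left_of_chain pos C q) \<and>
         (strictly_right_of_chain pos C p \<longleftrightarrow> strictly_right_of_chain pos C q)"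
proof -
  let ?S = "closed_segment p q"
  have rng: "snd (pos bot) \<le> snd z \<and> snd z \<le> snd (pos top)" if "z \<in> ?S" for z
    using seg_snd[OF that] rp rq by linarith
  have sub: "?S \<subseteq> E1 \<union> E2"
  proof
    fix z assume z: "z \<in> ?S"
    show "z \<in> E1 \<union> E2" using trich[OF conjunct1[OF rng[OF z]] conjunct2[OF rng[OF z]]]
      E1_iff[OF conjunct1[OF rng[OF z]] conjunct2[OF rng[OF z]]]
      E2_iff[OF conjunct1[OF rng[OF z]] conjunct2[OF rng[OF z]]] by blast
  qed
  have dis: "E1 \<inter> E2 \<inter> ?S = {}"
  proof (rule ccontr)
    assume "E1 \<inter> E2 \<inter> ?S \<noteq> {}"
    then obtain z where z: "z \<in> E1" "z \<in> E2" "z \<in> ?S" by blast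
    have "\<not> onpath pos C z" using av z by blast
    thus False using E1_iff[OF conjunct1[OF rng[OF z(3)]] conjunct2[OF rng[OF z(3)]]]
      E2_iff[OF conjunct1[OF rng[OF z(3)]] conjunct2[OF rng[OF z(3)]]] z excl_lr by blast
  qed
  have "\<not> (E1 \<inter> ?S \<noteq> {} \<and> E2 \<inter> ?S \<noteq> {})"
    using connected_segment[of p q] closed_E1 closed_E2 sub dis unfolding connected_closed by blast
  moreover have "p \<in> ?S" "q \<in> ?S" by auto
  moreover have "\<not> onpath pos C p" "\<not> onpath pos C q" using av by auto
  ultimately show ?thesis
    using E1_iff[OF rp] E2_iff[OF rp] E1_iff[OF rq] E2_iff[OF rq] trich[OF rp] trich[OF rq]
      excl_lr[of p] excl_lr[of q] by blast
qed

end



definition segpt :: "real \<times> real \<Rightarrow> real \<times> real \<Rightarrow> real \<Rightarrow> real \<times> real" where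
  "segpt A B t = A + ((t - snd A) / (snd B - snd A)) *\<^sub>R (B - A)"

lemma segpt:
  assumes "snd A < snd B" "snd A \<le> t" "t \<le> snd B"
  shows "segpt A B t \<in> closed_segment A B" "snd (segpt A B t) = t" "fst (segpt A B t) = Xf A B t"
proof -
  show s: "snd (segpt A B t) = t" using assms unfolding segpt_def by simp
  show f: "fst (segpt A B t) = Xf A B t" unfolding segpt_def Xf_def by simp
  show "segpt A B t \<in> closed_segment A B" using seg_iff[OF assms(1)] s f assms by simp
qed

lemma ex_maxchain:
  assumes "is_chain (S::'a::{finite,order} set)" shows "\<exists>M. maximal_chain M \<and> S \<subseteq> M"
proof -
  let ?T = "{D. is_chain D \<and> S \<subseteq> D}"
  have "finite ?T" by simp
  moreover have "S \<in> ?T" using assms by simp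
  ultimately obtain M where M: "M \<in> ?T" "\<forall>b\<in>?T. M \<subseteq> b \<longrightarrow> M = b"
    using finite_has_maximal[of ?T] by blast
  have "maximal_chain M" unfolding maximal_chain_def using M by auto
  thus ?thesis using M by auto
qed

lemma agree_chain:
  fixes A S :: "'a::{finite,bounded_lattice} set"
  assumes MA: "maximal_chain A" and x0: "x0 \<in> A" and S: "is_chain S" "\<forall>s\<in>S. x0 \<le> s"
  shows "\<exists>B. maximal_chain B \<and> S \<subseteq> B \<and> A \<inter> {z. z \<le> x0} = B \<inter> {z. z \<le> x0}"
proof -
  have "is_chain ((A \<inter> {z. z \<le> x0}) \<union> S)"
    using S mc_chain[OF MA] unfolding is_chain_def by (auto intro: order.trans) blast
  then obtain B where B: "maximal_chain B" "(A \<inter> {z. z \<le> x0}) \<union> S \<subseteq> B"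
    using ex_maxchain by blast
  have "B \<inter> {z. z \<le> x0} \<subseteq> A"
  proof
    fix b assume b: "b \<in> B \<inter> {z. z \<le> x0}"
    show "b \<in> A"
    proof (rule mc_ext[OF MA])
      fix c assume c: "c \<in> A"
      show "b \<le> c \<or> c \<le> b"
      proof (cases "c \<le> x0")
        case True thus ?thesis using c b B mc_chain[OF B(1), of b c] by auto
      next
        case False
        hence "x0 \<le> c" using mc_chain[OF MA c x0] by auto
        thus ?thesis using b by auto
      qed
    qed
  qed
  thus ?thesis using B by blast
qed

context
  fixes pos :: "'a::{finite,bounded_lattice} \<Rightarrow> real \<times> real"
  assumes P: "planar_diagram pos" and NT: "(bot::'a) \<noteq> top"
begin

lemma EP:
  assumes MC: "maximal_chain C" and uv: "u \<lessdot> v" "u \<notin> C" "v \<notin> C"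
  shows "(strictly_left_of_chain pos C (pos u) \<longleftrightarrow> strictly_left_of_chain pos C (pos v)) \<and>
         (strictly_right_of_chain pos C (pos u) \<longleftrightarrow> strictly_right_of_chain pos C (pos v))"
proof (rule SIDE[OF P MC NT vrange[OF P MC NT] vrange[OF P MC NT]])
  show "\<forall>z\<in>closed_segment (pos u) (pos v). \<not> onpath pos C z"
    using edge_path[OF P MC NT uv(1)] uv by blast
qed

lemma subseg_avoid:
  assumes MC: "maximal_chain C" and uv: "u \<lessdot> v" "\<not> (u \<in> C \<and> v \<in> C)"
    and pq: "p \<in> closed_segment (pos u) (pos v)" "q \<in> closed_segment (pos u) (pos v)"
    and ex: "\<forall>w\<in>{u,v} \<inter> C. pos w \<notin> closed_segment p q"
  shows "\<forall>z\<in>closed_segment p q. \<not> onpath pos C z"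
proof (intro ballI notI)
  fix z assume z: "z \<in> closed_segment p q" and o: "onpath pos C z"
  have "closed_segment p q \<subseteq> closed_segment (pos u) (pos v)"
    using pq by (simp add: closed_segment_subset convex_closed_segment)
  hence "z \<in> pos ` ({u,v} \<inter> C)" using edge_path[OF P MC NT uv(1,2) _ o] z by blast
  thus False using ex z by blast
qed

lemma coincide:
  assumes MA: "maximal_chain A" and MB: "maximal_chain B" and x0: "x0 \<in> A"
    and ag: "A \<inter> {z. z \<le> x0} = B \<inter> {z. z \<le> x0}"
    and hp: "snd p \<le> snd (pos x0)"
  shows "\<not> (strictly_right_of_chain pos A p \<and> strictly_left_of_chain pos B p)"
proof
  assume H: "strictly_right_of_chain pos A p \<and> strictly_left_of_chain pos B p"
  then obtain a b where ab: "a \<in> A" "b \<in> A" "a \<lessdot> b" "snd (pos a) \<le> snd p" "snd p \<le> snd (pos b)"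
    unfolding strictly_right_of_chain_def by blast
  have x0B: "x0 \<in> B" using ag x0 by blast
  show False
  proof (cases "b \<le> x0")
    case True
    have "a \<le> x0" using True ab(3) unfolding covers_def by auto
    hence "a \<in> B" "b \<in> B" using ag ab True by blast+
    thus False using side_char[OF P MB \<open>a \<in> B\<close> \<open>b \<in> B\<close> ab(3-5)] side_char[OF P MA ab] H by linarith
  next
    case False
    hence "x0 < b" using mc_chain[OF MA x0 ab(2)] by (auto simp: less_le)
    have "a \<le> x0"
    proof (rule ccontr)
      assume "\<not> a \<le> x0" hence "x0 < a" using mc_chain[OF MA x0 ab(1)] by (auto simp: less_le)
      thus False using hlt[OF P MA, of x0 a] hp ab by linarith
    qed
    hence "a = x0" using \<open>x0 < b\<close> ab(3) unfolding covers_def by (auto simp: less_le)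
    hence sp: "snd p = snd (pos x0)" using ab hp by auto
    have "fst p > fst (pos x0)" using side_char(2)[OF P MA ab] H \<open>a = x0\<close> sp by (simp add: Xf_bot)
    moreover obtain a' b' where ab': "a' \<in> B" "b' \<in> B" "a' \<lessdot> b'" "snd (pos a') \<le> snd p" "snd p \<le> snd (pos b')"
      using H unfolding strictly_left_of_chain_def by blast
    have "x0 = a' \<or> x0 = b'" using bracket_vertex[OF P MB x0B ab'(1-3)] ab'(4,5) sp by auto
    hence "Xf (pos a') (pos b') (snd p) = fst (pos x0)"
      using sp hcov[OF P MB ab'(3)] by (auto simp: Xf_bot Xf_top)
    hence "fst p < fst (pos x0)" using side_char(1)[OF P MB ab'] H by simp
    ultimately show False by simp
  qed
qed

lemma BL:
  assumes MA: "maximal_chain A" and MB: "maximal_chain B" and x0: "x0 \<in> A"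
    and ag: "A \<inter> {z. z \<le> x0} = B \<inter> {z. z \<le> x0}"
  shows "strictly_right_of_chain pos A (pos y) \<Longrightarrow> strictly_left_of_chain pos B (pos y)
     \<Longrightarrow> \<exists>v\<in>A \<union> B. x0 \<le> v \<and> v < y"
proof (induction "card {z. z < y}" arbitrary: y rule: less_induct)
  case less
  have x0B: "x0 \<in> B" using ag x0 by blast
  have yA: "y \<notin> A" using vertex_in_noside[OF P MA NT] less.prems by blast
  have yB: "y \<notin> B" using vertex_in_noside[OF P MB NT] less.prems by blast
  have "y \<noteq> bot" using yA mc_bot[OF MA] by auto
  then obtain w where w: "w \<lessdot> y" using cover_below[of bot y] by (auto simp: bot.not_eq_extremum)
  show ?case
  proof (cases "w \<in> A \<union> B")
    case True
    show ?thesis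
    proof (cases "x0 \<le> w")
      case True thus ?thesis using \<open>w \<in> A \<union> B\<close> w unfolding covers_def by auto
    next
      case False
      hence "w < x0" using True mc_chain[OF MA x0] mc_chain[OF MB x0B] by (auto simp: less_le)
      hence hw: "snd (pos w) < snd (pos x0)" using hlt[OF P MA] by blast
      have hy: "snd (pos x0) < snd (pos y)"
        using coincide[OF MA MB x0 ag, of "pos y"] less.prems by linarith
      define q where "q = segpt (pos w) (pos y) (snd (pos x0))"
      have hwy: "snd (pos w) < snd (pos y)" using hcov[OF P MA w] .
      have q: "q \<in> closed_segment (pos w) (pos y)" "snd q = snd (pos x0)"
        using segpt[OF hwy] hw hy unfolding q_def by auto
      have ex: "pos w \<notin> closed_segment q (pos y)"
        using seg_snd[of "pos w" q "pos y"] q(2) hw hy by auto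
      have avA: "\<forall>z\<in>closed_segment q (pos y). \<not> onpath pos A z"
        by (rule subseg_avoid[OF MA w]) (use yA q ex in auto)
      have avB: "\<forall>z\<in>closed_segment q (pos y). \<not> onpath pos B z"
        by (rule subseg_avoid[OF MB w]) (use yB q ex in auto)
      have rq: "snd (pos bot) \<le> snd q" "snd q \<le> snd (pos top)" using q(2) vrange[OF P MA NT] by auto
      have "strictly_right_of_chain pos A q" using SIDE[OF P MA NT rq vrange[OF P MA NT] avA] less.prems by blast
      moreover have "strictly_left_of_chain pos B q" using SIDE[OF P MB NT rq vrange[OF P MB NT] avB] less.prems by blast
      ultimately show ?thesis using coincide[OF MA MB x0 ag, of q] q(2) by simp
    qed
  next
    case False
    have "strictly_right_of_chain pos A (pos w)" using EP[OF MA w] False yA less.prems by blast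
    moreover have "strictly_left_of_chain pos B (pos w)" using EP[OF MB w] False yB less.prems by blast
    moreover have "card {z. z < w} < card {z. z < y}"
    proof (rule psubset_card_mono)
      show "{z. z < w} \<subset> {z. z < y}" using w unfolding covers_def by (auto intro: less_trans)
    qed simp
    ultimately obtain v where "v \<in> A \<union> B" "x0 \<le> v" "v < w" using less.hyps by blast
    thus ?thesis using w unfolding covers_def by (auto intro: less_trans)
  qed
qed

lemma coatoms_incomp:
  assumes "x \<lessdot> top" "y \<lessdot> top" "x \<noteq> y" shows "\<not> x \<le> y"
  using assms unfolding covers_def by (auto simp: less_le)

lemma TOPSIDE:
  assumes x: "x \<lessdot> top" and y: "y \<lessdot> top" and xy: "x \<noteq> y" and MY: "maximal_chain Y" and yY: "y \<in> Y"
    and t: "snd (pos x) < t" "snd (pos y) < t" "t < snd (pos top)"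
  shows "strictly_left_of_chain pos Y (pos x) \<longleftrightarrow> Xf (pos x) (pos top) t < Xf (pos y) (pos top) t"
    and "strictly_right_of_chain pos Y (pos x) \<longleftrightarrow> Xf (pos x) (pos top) t > Xf (pos y) (pos top) t"
proof -
  have xY: "x \<notin> Y" using mc_chain[OF MY _ yY] coatoms_incomp[OF x y xy] coatoms_incomp[OF y x] xy by metis
  define q where "q = segpt (pos x) (pos top) t"
  have hx: "snd (pos x) < snd (pos top)" using hcov[OF P MY x] .
  have q: "q \<in> closed_segment (pos x) (pos top)" "snd q = t" "fst q = Xf (pos x) (pos top) t"
    using segpt[OF hx] t unfolding q_def by auto
  have ex: "pos top \<notin> closed_segment (pos x) q"
    using seg_snd[of "pos top" "pos x" q] q(2) t by auto
  have av: "\<forall>z\<in>closed_segment (pos x) q. \<not> onpath pos Y z"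
    by (rule subseg_avoid[OF MY x]) (use xY q ex in auto)
  have rq: "snd (pos bot) \<le> snd q" "snd q \<le> snd (pos top)" using q(2) t vrange(1)[OF P MY NT, of y] by auto
  have S: "(strictly_left_of_chain pos Y (pos x) \<longleftrightarrow> strictly_left_of_chain pos Y q) \<and>
         (strictly_right_of_chain pos Y (pos x) \<longleftrightarrow> strictly_right_of_chain pos Y q)"
    using SIDE[OF P MY NT vrange[OF P MY NT] rq av] .
  have br: "snd (pos y) \<le> snd q" "snd q \<le> snd (pos top)" using q(2) t by auto
  show "strictly_left_of_chain pos Y (pos x) \<longleftrightarrow> Xf (pos x) (pos top) t < Xf (pos y) (pos top) t"
    using S side_char(1)[OF P MY yY mc_top[OF MY] y br] q by simp
  show "strictly_right_of_chain pos Y (pos x) \<longleftrightarrow> Xf (pos x) (pos top) t > Xf (pos y) (pos top) t"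
    using S side_char(2)[OF P MY yY mc_top[OF MY] y br] q by simp
qed

end



lemma notK:
  fixes K :: "'a::{finite,bounded_lattice} set"
  assumes "maximal_chain K" "y \<in> K" "y \<lessdot> top" "\<not> w \<le> y" "w \<noteq> top"
  shows "w \<notin> K"
proof
  assume "w \<in> K"
  hence "y \<le> w" using mc_chain[OF assms(1) _ assms(2)] assms(4) by blast
  hence "y = w \<or> y < w" by auto
  thus False using assms(3-5) unfolding covers_def by (auto simp: top.not_eq_extremum)
qed

lemma two_lower_covers:
  "u \<lessdot> b \<Longrightarrow> v \<lessdot> b \<Longrightarrow> u \<le> v \<Longrightarrow> u = v"
  unfolding covers_def by (auto simp: less_le)

lemma core:
  fixes pos :: "'a::{finite,distrib_lattice,bounded_lattice} \<Rightarrow> real \<times> real"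
  assumes P: "planar_diagram pos" and NT: "(bot::'a) \<noteq> top"
    and LB: "left_boundary pos L" and x: "x \<lessdot> top" and y: "y \<lessdot> top" and xy: "x \<noteq> y"
    and LA: "\<forall>K. maximal_chain K \<and> y \<in> K \<longrightarrow> strictly_left_of_chain pos K (pos x)"
    and jr: "join_reducible x" and dL: "d \<in> L" and dx: "d \<lessdot> x"
  shows "\<exists>b\<in>L. b \<in> J0 \<and> b \<le> d \<and> \<not> b \<le> y"
proof -
  have mL: "maximal_chain L" using LB unfolding left_boundary_def by blast
  have noleft: "\<not> strictly_left_of_chain pos L (pos z)" for z
    using LB unfolding left_boundary_def by blast
  have rightL: "strictly_right_of_chain pos L (pos z)" if "z \<notin> L" for z
    using vertex_side[OF P mL NT that] noleft by blast
  have xny: "\<not> x \<le> y" using coatoms_incomp[OF P NT x y xy] .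
  have xtop: "x \<noteq> top" using x unfolding covers_def by auto
  have xK: "x \<notin> K" if "maximal_chain K" "y \<in> K" for K using notK[OF that y xny xtop] .
  have contraK: False if "maximal_chain K" "y \<in> K" "strictly_right_of_chain pos K (pos x)" for K
    using LA that excl_lr[OF P that(1) NT, of "pos x"] by blast
  have dtop: "d < top" using dx x unfolding covers_def by (auto intro: less_trans)
  have dny: "\<not> d \<le> y"
  proof
    assume dy: "d \<le> y"
    obtain g where g: "g \<lessdot> x" "\<not> g \<le> y"
    proof -
      obtain a b where ab: "a < x" "b < x" "x = sup a b" using jr unfolding join_reducible_def by blast
      show ?thesis
      proof (rule ccontr)
        assume nt: "\<not> thesis"
        have allc: "g \<le> y" if "g \<lessdot> x" for g
        proof (rule ccontr)
          assume "\<not> g \<le> y" thus False using nt \<open>g \<lessdot> x\<close> \<open>\<And>g. g \<lessdot> x \<Longrightarrow> \<not> g \<le> y \<Longrightarrow> thesis\<close> by blast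
        qed
        obtain ga where "a \<le> ga" "ga \<lessdot> x" using cover_below[OF ab(1)] by blast
        hence "a \<le> y" using allc order.trans by blast
        moreover obtain gb where "b \<le> gb" "gb \<lessdot> x" using cover_below[OF ab(2)] by blast
        hence "b \<le> y" using allc order.trans by blast
        ultimately show False using ab(3) xny by simp
      qed
    qed
    have gd: "g \<noteq> d" using g dy by auto
    have gL: "g \<notin> L"
    proof
      assume "g \<in> L"
      hence "g \<le> d \<or> d \<le> g" using mc_chain[OF mL _ dL] by blast
      thus False using two_lower_covers[OF g(1) dx] two_lower_covers[OF dx g(1)] gd by auto
    qed
    obtain K where K: "maximal_chain K" "{y, top} \<subseteq> K" "L \<inter> {z. z \<le> d} = K \<inter> {z. z \<le> d}"
      using agree_chain[OF mL dL, of "{y, top}"] dy unfolding is_chain_def by auto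
    have yK: "y \<in> K" using K by auto
    have gtop: "g \<noteq> top" using g xtop unfolding covers_def by auto
    have gK: "g \<notin> K" using notK[OF K(1) yK y g(2) gtop] .
    have "\<not> strictly_left_of_chain pos K (pos g)"
    proof
      assume "strictly_left_of_chain pos K (pos g)"
      then obtain v where v: "d \<le> v" "v < g" using BL[OF P NT mL K(1) dL K(3)] rightL[OF gL] by blast
      have "v < x" using v g(1) unfolding covers_def by (auto intro: less_le_trans)
      hence "v = d" using v dx unfolding covers_def by (auto simp: less_le)
      thus False using v g(1) dx unfolding covers_def by auto
    qed
    hence "strictly_right_of_chain pos K (pos g)" using vertex_side[OF P K(1) NT gK] by blast
    hence "strictly_right_of_chain pos K (pos x)" using EP[OF P NT K(1) g(1) gK xK[OF K(1) yK]] by blast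
    thus False using contraK K(1) yK by blast
  qed
  let ?T = "{z\<in>L. \<not> z \<le> y}"
  have "d \<in> ?T" using dL dny by auto
  then obtain b where b: "b \<in> ?T" "\<forall>z\<in>?T. z \<le> b \<longrightarrow> b = z" using finite_has_minimal[of ?T] by auto
  have bleast: "b \<le> z" if "z \<in> ?T" for z using b that mc_chain[OF mL, of b z] by auto
  have bd: "b \<le> d" using bleast \<open>d \<in> ?T\<close> .
  have bL: "b \<in> L" and bny: "\<not> b \<le> y" using b by auto
  have bbot: "b \<noteq> bot" using bny by auto
  obtain x0 where x0: "x0 \<in> L" "x0 \<lessdot> b" using mc_pred[OF mL bL bbot] by auto
  have x0y: "x0 \<le> y"
  proof (rule ccontr)
    assume "\<not> x0 \<le> y" hence "b \<le> x0" using bleast x0 by auto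
    thus False using x0 unfolding covers_def by auto
  qed
  have btop: "b \<noteq> top" using bd dtop by auto
  obtain K where K: "maximal_chain K" "{y, top} \<subseteq> K" "L \<inter> {z. z \<le> x0} = K \<inter> {z. z \<le> x0}"
    using agree_chain[OF mL x0(1), of "{y, top}"] x0y unfolding is_chain_def by auto
  have yK: "y \<in> K" using K by auto
  have climb: "strictly_right_of_chain pos K (pos w)" if "w \<in> L" "b \<le> w" "w \<le> d"
     "strictly_right_of_chain pos K (pos b)" for w
    using that
  proof (induction "card {z. z < w}" arbitrary: w rule: less_induct)
    case less
    show ?case
    proof (cases "w = b")
      case True thus ?thesis using less.prems by simp
    next
      case False
      hence bw: "b < w" using less.prems by auto
      hence "w \<noteq> bot" by auto
      then obtain w' where w': "w' \<in> L" "w' \<lessdot> w" using mc_pred[OF mL less.prems(1)] by auto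
      have "b \<le> w'"
      proof (rule ccontr)
        assume "\<not> b \<le> w'" hence "w' < b" using mc_chain[OF mL w'(1) bL] by (auto simp: less_le)
        thus False using bw w'(2) unfolding covers_def by auto
      qed
      moreover have "w' \<le> d" using w'(2) less.prems(3) unfolding covers_def by auto
      moreover have "card {z. z < w'} < card {z. z < w}"
        by (rule psubset_card_mono) (use w'(2) in \<open>auto simp: covers_def intro: less_trans\<close>)
      ultimately have r: "strictly_right_of_chain pos K (pos w')" using less.hyps w'(1) less.prems(4) by blast
      have nK: "u \<notin> K" if "b \<le> u" "u \<le> d" for u
      proof (rule notK[OF K(1) yK y])
        show "\<not> u \<le> y" using that bny order.trans by blast
        show "u \<noteq> top" using that dtop by auto
      qed
      show ?thesis using EP[OF P NT K(1) w'(2) nK nK] r \<open>b \<le> w'\<close> \<open>w' \<le> d\<close> bw less.prems by auto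
    qed
  qed
  have bJ: "join_irreducible b"
    unfolding join_irreducible_def
  proof (intro conjI allI impI bbot)
    fix p q assume pq: "b = sup p q"
    show "b = p \<or> b = q"
    proof (rule ccontr)
      assume nn: "\<not> (b = p \<or> b = q)"
      have plt: "p < b" "q < b" using pq nn by (auto simp: less_le)
      obtain r where r: "r < b" "\<not> r \<le> y"
      proof (cases "p \<le> y")
        case True
        hence "\<not> q \<le> y" using pq bny by auto
        thus ?thesis using that plt by blast
      next
        case False thus ?thesis using that plt by blast
      qed
      obtain z where z: "r \<le> z" "z \<lessdot> b" using cover_below[OF r(1)] by auto
      have zny: "\<not> z \<le> y" using z r by (meson order.trans)
      have zx0: "z \<noteq> x0" using zny x0y by auto
      have zL: "z \<notin> L"
      proof
        assume "z \<in> L"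
        hence "z \<le> x0 \<or> x0 \<le> z" using mc_chain[OF mL _ x0(1)] by blast
        thus False using two_lower_covers[OF z(2) x0(2)] two_lower_covers[OF x0(2) z(2)] zx0 by auto
      qed
      have ztop: "z \<noteq> top" using z btop unfolding covers_def by auto
      have zK: "z \<notin> K" using notK[OF K(1) yK y zny ztop] .
      have "\<not> strictly_left_of_chain pos K (pos z)"
      proof
        assume "strictly_left_of_chain pos K (pos z)"
        then obtain v where v: "x0 \<le> v" "v < z" using BL[OF P NT mL K(1) x0(1) K(3)] rightL[OF zL] by blast
        have "v < b" using v z(2) unfolding covers_def by (auto intro: less_le_trans)
        hence "v = x0" using v x0(2) unfolding covers_def by (auto simp: less_le)
        thus False using v z(2) x0(2) unfolding covers_def by auto
      qed
      hence "strictly_right_of_chain pos K (pos z)" using vertex_side[OF P K(1) NT zK] by blast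
      hence rb: "strictly_right_of_chain pos K (pos b)"
        using EP[OF P NT K(1) z(2) zK notK[OF K(1) yK y bny btop]] by blast
      have "strictly_right_of_chain pos K (pos d)" using climb[OF dL bd order.refl rb] .
      hence "strictly_right_of_chain pos K (pos x)"
        using EP[OF P NT K(1) dx notK[OF K(1) yK y dny] xK[OF K(1) yK]] dtop by blast
      thus False using contraK K(1) yK by blast
    qed
  qed
  show ?thesis using bL bJ bd bny unfolding J0_def by auto
qed



definition mir :: "real \<times> real \<Rightarrow> real \<times> real" where "mir p = (- fst p, snd p)"

lemma mir_mir[simp]: "mir (mir p) = p" by (simp add: mir_def)
lemma mir_inj: "mir p = mir q \<longleftrightarrow> p = q" by (metis mir_mir)
lemma snd_mir[simp]: "snd (mir p) = snd p" by (simp add: mir_def)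

lemma mir_comb: "mir ((1-u) *\<^sub>R a + u *\<^sub>R b) = (1-u) *\<^sub>R mir a + u *\<^sub>R mir b"
  by (simp add: mir_def algebra_simps)

lemma mir_seg: "mir p \<in> closed_segment (mir a) (mir b) \<longleftrightarrow> p \<in> closed_segment a b"
proof
  assume "mir p \<in> closed_segment (mir a) (mir b)"
  then obtain u where u: "0 \<le> u" "u \<le> 1" "mir p = (1 - u) *\<^sub>R mir a + u *\<^sub>R mir b"
    unfolding closed_segment_def by auto
  have "p = (1 - u) *\<^sub>R a + u *\<^sub>R b" using arg_cong[OF u(3), of mir] mir_comb[of u "mir a" "mir b"] by simp
  thus "p \<in> closed_segment a b" unfolding closed_segment_def using u by auto
next
  assume "p \<in> closed_segment a b"
  then obtain u where u: "0 \<le> u" "u \<le> 1" "p = (1 - u) *\<^sub>R a + u *\<^sub>R b"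
    unfolding closed_segment_def by auto
  have "mir p = (1 - u) *\<^sub>R mir a + u *\<^sub>R mir b" using u(3) mir_comb by simp
  thus "mir p \<in> closed_segment (mir a) (mir b)" unfolding closed_segment_def using u by auto
qed

lemma cross_mir: "cross (mir a) (mir b) (mir p) = - cross a b p"
  unfolding cross_def mir_def by (simp add: algebra_simps)

lemma planar_mir:
  assumes P: "planar_diagram pos" shows "planar_diagram (\<lambda>z. mir (pos z))"
  unfolding planar_diagram_def
proof (intro conjI allI impI)
  show "inj (\<lambda>z. mir (pos z))" using P unfolding planar_diagram_def inj_def by (auto simp: mir_inj)
  show "snd (mir (pos x)) < snd (mir (pos y))" if "x \<lessdot> y" for x y using P that unfolding planar_diagram_def by simp
  show "z = x \<or> z = y" if "x \<lessdot> y" "mir (pos z) \<in> closed_segment (mir (pos x)) (mir (pos y))" for x y z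
    using P that unfolding planar_diagram_def mir_seg by blast
  show "closed_segment (mir (pos a)) (mir (pos b)) \<inter> closed_segment (mir (pos c)) (mir (pos d))
        \<subseteq> (\<lambda>z. mir (pos z)) ` ({a, b} \<inter> {c, d})"
    if "a \<lessdot> b" "c \<lessdot> d" "(a, b) \<noteq> (c, d)" for a b c d
  proof
    fix w assume w: "w \<in> closed_segment (mir (pos a)) (mir (pos b)) \<inter> closed_segment (mir (pos c)) (mir (pos d))"
    have "mir w \<in> closed_segment (pos a) (pos b) \<inter> closed_segment (pos c) (pos d)"
      using w mir_seg[of "mir w"] by simp
    hence "mir w \<in> pos ` ({a, b} \<inter> {c, d})" using P that unfolding planar_diagram_def by blast
    then obtain e where "e \<in> {a, b} \<inter> {c, d}" "mir w = pos e" by blast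
    thus "w \<in> (\<lambda>z. mir (pos z)) ` ({a, b} \<inter> {c, d})" by (metis image_eqI mir_mir)
  qed
qed

lemma left_mir: "strictly_left_of_chain (\<lambda>z. mir (pos z)) C (mir p) \<longleftrightarrow> strictly_right_of_chain pos C p"
  unfolding strictly_left_of_chain_def strictly_right_of_chain_def cross_mir by simp

lemma right_mir: "strictly_right_of_chain (\<lambda>z. mir (pos z)) C (mir p) \<longleftrightarrow> strictly_left_of_chain pos C p"
  unfolding strictly_left_of_chain_def strictly_right_of_chain_def cross_mir by simp

lemma lb_mir: "right_boundary pos R \<Longrightarrow> left_boundary (\<lambda>z. mir (pos z)) R"
  unfolding right_boundary_def left_boundary_def using left_mir by blast

lemma CUBE:
  fixes pos :: "'a::{finite,distrib_lattice,bounded_lattice} \<Rightarrow> real \<times> real"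
  assumes P: "planar_diagram pos" and NT: "(bot::'a) \<noteq> top"
    and x: "x \<lessdot> top" and y: "y \<lessdot> top" and z: "z \<lessdot> top" and d: "x \<noteq> y" "y \<noteq> z" "x \<noteq> z"
    and t: "snd (pos x) < t" "snd (pos y) < t" "snd (pos z) < t" "t < snd (pos top)"
    and o: "Xf (pos x) (pos top) t < Xf (pos y) (pos top) t" "Xf (pos y) (pos top) t < Xf (pos z) (pos top) t"
  shows False
proof -
  define x0 where "x0 = inf x z"
  have "is_chain {x0, x, top}" unfolding is_chain_def x0_def by auto
  then obtain A where A: "maximal_chain A" "{x0, x, top} \<subseteq> A" using ex_maxchain by blast
  have x0A: "x0 \<in> A" and xA: "x \<in> A" using A by auto
  obtain B where B: "maximal_chain B" "{z, top} \<subseteq> B" "A \<inter> {w. w \<le> x0} = B \<inter> {w. w \<le> x0}"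
    using agree_chain[OF A(1) x0A, of "{z, top}"] unfolding is_chain_def x0_def by auto
  have zB: "z \<in> B" using B by auto
  have "strictly_right_of_chain pos A (pos y)"
    using TOPSIDE(2)[OF P NT y x d(1)[symmetric] A(1) xA t(2) t(1) t(4)] o by simp
  moreover have "strictly_left_of_chain pos B (pos y)"
    using TOPSIDE(1)[OF P NT y z d(2) B(1) zB t(2) t(3) t(4)] o by simp
  ultimately obtain v where v: "v \<in> A \<union> B" "x0 \<le> v" "v < y" using BL[OF P NT A(1) B(1) x0A B(3)] by blast
  have ytop: "y \<noteq> top" using y unfolding covers_def by auto
  have supc: "sup y w = top" if "w \<lessdot> top" "w \<noteq> y" for w
  proof -
    have "\<not> w \<le> y" using coatoms_incomp[OF P NT that(1) y that(2)] .
    hence "y < sup y w" by (simp add: less_le) (metis sup.absorb_iff1)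
    thus ?thesis using y unfolding covers_def using top.not_eq_extremum by blast
  qed
  have bad: False if "x0 \<le> y"
  proof -
    have "y = sup y (inf x z)" using that x0_def by (simp add: sup.absorb1)
    also have "\<dots> = inf (sup y x) (sup y z)" by (rule sup_inf_distrib1)
    also have "\<dots> = top" using supc[OF x d(1)] supc[OF z d(2)[symmetric]] by simp
    finally show False using ytop by simp
  qed
  have nlt: "\<not> w < y" if "w \<lessdot> top" "w \<noteq> y" for w
    using coatoms_incomp[OF P NT that(1) y that(2)] by auto
  show False
  proof (cases "v \<in> A")
    case True
    hence "v \<le> x \<or> x \<le> v" using mc_chain[OF A(1) _ xA] by blast
    thus False
    proof
      assume "v \<le> x" thus False using bad v by (meson order.trans less_imp_le)
    next
      assume "x \<le> v" thus False using nlt[OF x d(1)] v by (meson le_less_trans)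
    qed
  next
    case False
    hence vB: "v \<in> B" using v by auto
    hence "v \<le> z \<or> z \<le> v" using mc_chain[OF B(1) _ zB] by blast
    thus False
    proof
      assume "v \<le> z" thus False using bad v by (meson order.trans less_imp_le)
    next
      assume "z \<le> v" thus False using nlt[OF z d(2)[symmetric]] v by (meson le_less_trans)
    qed
  qed
qed

lemma jsp_ge:
  fixes L :: "'a::{finite,bounded_lattice} set"
  assumes "maximal_chain L" "b \<in> L" "b \<in> J0" "b \<le> d"
  shows "b \<le> jsp L d"
proof -
  let ?S = "{w. w \<in> L \<and> w \<in> J0 \<and> w \<le> d}"
  obtain m where m: "m \<in> ?S" "\<forall>w\<in>?S. m \<le> w \<longrightarrow> m = w"
    using finite_has_maximal[of ?S] assms by auto
  have g: "w \<le> m" if "w \<in> ?S" for w using m that mc_chain[OF assms(1), of m w] by auto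
  have "jsp L d = m" unfolding jsp_def by (rule Greatest_equality) (use m g in auto)
  thus ?thesis using g assms by auto
qed



theorem lemma2p1:
  fixes pos :: "'a::{finite, distrib_lattice, bounded_lattice} \<Rightarrow> real \<times> real"
    and L R :: "'a set" and c_l c_r d_l d_r :: 'a
  assumes "planar_diagram pos"
    and "left_boundary pos L" and "right_boundary pos R"
    and "c_l \<lessdot> top" and "c_r \<lessdot> top" and "c_l \<noteq> c_r"
    and "join_reducible c_l" and "join_reducible c_r"
    and "left_of pos c_l c_r"
    and "d_l \<in> L" and "d_l \<lessdot> c_l"
    and "d_r \<in> R" and "d_r \<lessdot> c_r"
  shows "top = sup (ljsp L d_l) (rjsp R d_r)"
proof -
  note P = assms(1) and LB = assms(2) and RB = assms(3) and cl = assms(4) and cr = assms(5)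
    and dlr = assms(6)
  have NT: "(bot::'a) \<noteq> top" using cl unfolding covers_def by (metis bot.extremum_strict)
  have mL: "maximal_chain L" using LB unfolding left_boundary_def by blast
  have mR: "maximal_chain R" using RB unfolding right_boundary_def by blast
  obtain C where C: "maximal_chain C" "c_r \<in> C" "strictly_left_of_chain pos C (pos c_l)"
    using assms(9) unfolding left_of_def by blast
  define F where "F = (\<lambda>w t. Xf (pos w) (pos top) t)"
  have hl: "snd (pos c_l) < snd (pos top)" using hcov[OF P C(1) cl] .
  have hr: "snd (pos c_r) < snd (pos top)" using hcov[OF P C(1) cr] .
  have ord: "F c_l t < F c_r t" if "snd (pos c_l) < t" "snd (pos c_r) < t" "t < snd (pos top)" for t
    using TOPSIDE(1)[OF P NT cl cr dlr C(1) C(2) that] C(3) unfolding F_def by simp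
  define t0 where "t0 = (max (snd (pos c_l)) (snd (pos c_r)) + snd (pos top)) / 2"
  have t0: "snd (pos c_l) < t0" "snd (pos c_r) < t0" "t0 < snd (pos top)" using hl hr unfolding t0_def by auto
  have LA: "\<forall>K. maximal_chain K \<and> c_r \<in> K \<longrightarrow> strictly_left_of_chain pos K (pos c_l)"
    using TOPSIDE(1)[OF P NT cl cr dlr _ _ t0] ord[OF t0] unfolding F_def by blast
  have RA: "\<forall>K. maximal_chain K \<and> c_l \<in> K \<longrightarrow> strictly_right_of_chain pos K (pos c_r)"
    using TOPSIDE(2)[OF P NT cr cl dlr[symmetric] _ _ t0(2) t0(1) t0(3)] ord[OF t0] unfolding F_def by blast
  obtain b where b: "b \<in> L" "b \<in> J0" "b \<le> d_l" "\<not> b \<le> c_r"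
    using core[OF P NT LB cl cr dlr LA assms(7,10,11)] by blast
  have LA': "\<forall>K. maximal_chain K \<and> c_l \<in> K \<longrightarrow> strictly_left_of_chain (\<lambda>z. mir (pos z)) K (mir (pos c_r))"
    using RA left_mir by blast
  obtain a where a: "a \<in> R" "a \<in> J0" "a \<le> d_r" "\<not> a \<le> c_l"
    using core[OF planar_mir[OF P] NT lb_mir[OF RB] cr cl dlr[symmetric] LA' assms(8,12,13)] by blast
  have ab: "sup a b = top"
  proof (rule ccontr)
    assume "sup a b \<noteq> top"
    then obtain k where k: "sup a b \<le> k" "k \<lessdot> top" using cover_below[of "sup a b" top]
      by (auto simp: top.not_eq_extremum)
    have kl: "k \<noteq> c_l" using k a by auto
    have kr: "k \<noteq> c_r" using k b by auto
    have hk: "snd (pos k) < snd (pos top)" using hcov[OF P C(1) k(2)] .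
    define t where "t = (max (max (snd (pos c_l)) (snd (pos c_r))) (snd (pos k)) + snd (pos top)) / 2"
    have t: "snd (pos c_l) < t" "snd (pos c_r) < t" "snd (pos k) < t" "t < snd (pos top)"
      using hl hr hk unfolding t_def by auto
    have neq: "F k t \<noteq> F w t" if w: "w \<lessdot> top" "w \<noteq> k" "snd (pos w) < t" for w
    proof -
      obtain W where W: "maximal_chain W" "{w} \<subseteq> W" using ex_maxchain[of "{w}"] unfolding is_chain_def by auto
      have "k \<notin> W" using notK[OF W(1) _ w(1) coatoms_incomp[OF P NT k(2) w(1) w(2)[symmetric]]] W k(2)
        unfolding covers_def by auto
      hence "strictly_left_of_chain pos W (pos k) \<or> strictly_right_of_chain pos W (pos k)"
        using vertex_side[OF P W(1) NT] by blast
      thus ?thesis using TOPSIDE[OF P NT k(2) w(1) w(2)[symmetric] W(1) _ t(3) w(3) t(4)] W unfolding F_def by auto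
    qed
    have o: "F c_l t < F c_r t" using ord t by simp
    have n1: "F k t \<noteq> F c_l t" using neq[OF cl kl[symmetric] t(1)] .
    have n2: "F k t \<noteq> F c_r t" using neq[OF cr kr[symmetric] t(2)] .
    consider "F k t < F c_l t" | "F c_l t < F k t \<and> F k t < F c_r t" | "F c_r t < F k t"
      using o n1 n2 by linarith
    thus False
    proof cases
      case 1 thus False using CUBE[OF P NT k(2) cl cr kl dlr kr t(3) t(1) t(2) t(4)] o
        unfolding F_def by blast
    next
      case 2 thus False using CUBE[OF P NT cl k(2) cr kl[symmetric] kr dlr t(1) t(3) t(2) t(4)]
        unfolding F_def by blast
    next
      case 3 thus False using CUBE[OF P NT cl cr k(2) dlr kr[symmetric] kl[symmetric] t(1) t(2) t(3) t(4)] o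
        unfolding F_def by blast
    qed
  qed
  have "b \<le> ljsp L d_l" using jsp_ge[OF mL b(1-3)] unfolding ljsp_def .
  moreover have "a \<le> rjsp R d_r" using jsp_ge[OF mR a(1-3)] unfolding rjsp_def .
  ultimately have "sup a b \<le> sup (ljsp L d_l) (rjsp R d_r)" by (meson le_supI1 le_supI2 sup.bounded_iff)
  thus ?thesis using ab by (metis top.extremum_unique)
qed


end
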